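(* Under the standing setup and assumptions (A1)–(A3) described in the context, there exist operators $S^b\in\mathcal A_b$ and $S^t\in\mathcal A_t$ such that $$U|\Omega,\Omega\rangle=S^bS^t|\Omega,\Omega\rangle .$$ Moreover, writing $U|\Omega,\Omega\rangle=\sum_{i\in I,j\in J}X_{ij}|i,j\rangle$, the coefficients factor as $X_{ij}=\alpha_i\beta_j$ for some complex numbers $\alpha_i$ ($i\in I$), $\beta_j$ ($j\in J$).
   Context: Standing setup. $\mathcal H$ is a finite-dimensional complex Hilbert space; $I$ and $J$ are finite index sets and $\{|i,j\rangle: i\in I,j\in J\}$ is an orthonormal family in $\mathcal H$ (physically: low-energy edge states of a gapped 2D system on a cylinder, $i$ labelling the bottom edge and $j$ the top edge, in a fixed topological sector). $V$ denotes their span. Real numbers $\varepsilon^b_i$ ($i\in I$) and $\varepsilon^t_j$ ($j\in J$) are given (physically $\varepsilon^b_i=E^b_i-\mu_bN^b_i$, $\varepsilon^t_j=E^t_j-\mu_tN^t_j$). There is a distinguished index, denoted $\Omega$, in $I$ and in $J$ with $\varepsilon^b_\Omega=\varepsilon^t_\Omega=0\le \varepsilon^b_i,\varepsilon^t_j$ for all $i,j$. For $\delta>0$ put $I_\delta=\{i\in I:\varepsilon^b_i\le\delta\}$, $J_\delta=\{j\in J:\varepsilon^t_j\le\delta\}$, $V_\delta=\mathrm{span}\{|i,j\rangle:i\in I_\delta,j\in J_\delta\}$. $\mathcal A_b$ and $\mathcal A_t$ are sets of linear operators on $\mathcal H$ ("operators supported near the bottom edge / top edge"), each closed under sums, scalar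 multiples, products and adjoints and containing the identity, such that every element of $\mathcal A_b$ commutes with every element of $\mathcal A_t$. $U$ is a unitary on $\mathcal H$ (the flux-insertion evolution, a finite-time evolution by a local Hamiltonian) such that $U^\dagger\mathcal A_bU\subseteq\mathcal A_b$, $U\mathcal A_bU^\dagger\subseteq\mathcal A_b$, $U^\dagger\mathcal A_tU\subseteq\mathcal A_t$, $U\mathcal A_tU^\dagger\subseteq\mathcal A_t$ (idealized Lieb–Robinson locality). Assumptions. (A1) For all $i,i'\in I$ there is $O^b_{i'i}\in\mathcal A_b$ with $O^b_{i'i}|k,j\rangle=\delta_{ki}|i',j\rangle$ for all $k\in I,j\in J$; for all $j,j'\in J$ there is $O^t_{j'j}\in\mathcal A_t$ with $O^t_{j'j}|i,l\rangle=\delta_{lj}|i,j'\rangle$ for all $i\in I,l\in J$. (A2) For all $i\in I$, $j\in J$, $O^b\in\mathcal A_b$, $O^t\in\mathcal A_t$: $\langle i,j|O^bO^t|i,j\rangle=\langle i,j|O^b|i,j\rangle\langle i,j|O^t|i,j\rangle$. (A3) There is $\delta>0$ with $U V_\delta\subseteq V$. *)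

theory Defs
  imports "Jordan_Normal_Form.Matrix" "Jordan_Normal_Form.Schur_Decomposition"
begin

text \<open>The finite-dimensional Hilbert space H is modelled as complex n-vectors
(carrier_vec n), operators as complex n x n matrices, the adjoint is mat_adjoint.\<close>

text \<open>Physics inner product: antilinear in the first argument, linear in the second.\<close>
definition braket :: "complex vec \<Rightarrow> complex vec \<Rightarrow> complex" where
  "braket v w = w \<bullet>c v"

definition kcomb :: "nat \<Rightarrow> ('i \<Rightarrow> 'j \<Rightarrow> complex vec) \<Rightarrow> ('i \<times> 'j) set
    \<Rightarrow> ('i \<times> 'j \<Rightarrow> complex) \<Rightarrow> complex vec" where
  "kcomb n ket S c = vec n (\<lambda>k. \<Sum>p\<in>S. c p * (ket (fst p) (snd p) $ k))"

definition kspan :: "nat \<Rightarrow> ('i \<Rightarrow> 'j \<Rightarrow> complex vec) \<Rightarrow> ('i \<times> 'j) set \<Rightarrow> complex vec set" where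
  "kspan n ket S = {kcomb n ket S c | c. True}"

end

theory Submission imports Defs begin

lemma adj_carrier: "A \<in> carrier_mat n n \<Longrightarrow> mat_adjoint A \<in> carrier_mat n n"
  unfolding mat_adjoint_def by auto

lemma adj_index: "A \<in> carrier_mat n n \<Longrightarrow> i < n \<Longrightarrow> j < n \<Longrightarrow> mat_adjoint A $$ (i,j) = cnj (A $$ (j,i))"
  unfolding mat_adjoint_def by (auto simp: mat_of_rows_index)

lemma braket_sum: "v \<in> carrier_vec n \<Longrightarrow> w \<in> carrier_vec n \<Longrightarrow> braket v w = (\<Sum>k<n. w$k * cnj (v$k))"
  unfolding braket_def scalar_prod_def by (auto simp: lessThan_atLeast0)

lemma mv_vecsum:
  fixes M :: "complex mat"
  assumes M: "M \<in> carrier_mat n n" and v: "\<forall>p\<in>S. v p \<in> carrier_vec n"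
  shows "M *\<^sub>v vec n (\<lambda>k. \<Sum>p\<in>S. c p * v p $ k) = vec n (\<lambda>k. \<Sum>p\<in>S. c p * (M *\<^sub>v v p) $ k)"
proof (rule eq_vecI)
  fix k assume k: "k < dim_vec (vec n (\<lambda>k. \<Sum>p\<in>S. c p * (M *\<^sub>v v p) $ k))"
  hence k: "k < n" by simp
  have "(M *\<^sub>v vec n (\<lambda>k. \<Sum>p\<in>S. c p * v p $ k)) $ k = (\<Sum>l<n. M $$ (k,l) * (\<Sum>p\<in>S. c p * v p $ l))"
    using M k by (simp add: scalar_prod_def lessThan_atLeast0)
  also have "\<dots> = (\<Sum>l<n. \<Sum>p\<in>S. M $$ (k,l) * (c p * v p $ l))"
    by (simp add: sum_distrib_left)
  also have "\<dots> = (\<Sum>p\<in>S. \<Sum>l<n. M $$ (k,l) * (c p * v p $ l))"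
    by (rule sum.swap)
  also have "\<dots> = (\<Sum>p\<in>S. c p * (\<Sum>l<n. M $$ (k,l) * v p $ l))"
    unfolding sum_distrib_left by (intro sum.cong refl) (rule mult.left_commute)
  also have "\<dots> = (\<Sum>p\<in>S. c p * (M *\<^sub>v v p) $ k)"
  proof (intro sum.cong refl)
    fix p assume "p \<in> S"
    hence "dim_vec (v p) = n" using v by auto
    thus "c p * (\<Sum>l<n. M $$ (k,l) * v p $ l) = c p * (M *\<^sub>v v p) $ k"
      using M k by (simp add: scalar_prod_def lessThan_atLeast0)
  qed
  finally show "(M *\<^sub>v vec n (\<lambda>k. \<Sum>p\<in>S. c p * v p $ k)) $ k = vec n (\<lambda>k. \<Sum>p\<in>S. c p * (M *\<^sub>v v p) $ k) $ k"
    using k by simp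
qed (use M in simp)

lemma braket_vecsum_left:
  assumes w: "w \<in> carrier_vec n" and v: "\<forall>p\<in>S. v p \<in> carrier_vec n"
  shows "braket (vec n (\<lambda>k. \<Sum>p\<in>S. c p * v p $ k)) w = (\<Sum>p\<in>S. cnj (c p) * braket (v p) w)"
proof -
  have "braket (vec n (\<lambda>k. \<Sum>p\<in>S. c p * v p $ k)) w = (\<Sum>k<n. w$k * cnj (\<Sum>p\<in>S. c p * v p $ k))"
    using w by (simp add: braket_sum[where n=n])
  also have "\<dots> = (\<Sum>k<n. \<Sum>p\<in>S. w$k * (cnj (c p) * cnj (v p $ k)))"
    by (simp add: cnj_sum sum_distrib_left)
  also have "\<dots> = (\<Sum>p\<in>S. \<Sum>k<n. w$k * (cnj (c p) * cnj (v p $ k)))"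
    by (rule sum.swap)
  also have "\<dots> = (\<Sum>p\<in>S. cnj (c p) * (\<Sum>k<n. w$k * cnj (v p $ k)))"
    by (simp add: sum_distrib_left mult_ac)
  also have "\<dots> = (\<Sum>p\<in>S. cnj (c p) * braket (v p) w)"
    using w v by (intro sum.cong refl) (simp add: braket_sum[where n=n])
  finally show ?thesis .
qed

lemma braket_adj:
  assumes U: "U \<in> carrier_mat n n" and x: "x \<in> carrier_vec n" and y: "y \<in> carrier_vec n"
  shows "braket (U *\<^sub>v x) y = braket x (mat_adjoint U *\<^sub>v y)"
proof -
  have "braket (U *\<^sub>v x) y = (\<Sum>k<n. y$k * cnj (\<Sum>l<n. U $$ (k,l) * x $ l))"
    using U x y by (simp add: braket_sum[where n=n] scalar_prod_def lessThan_atLeast0)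
  also have "\<dots> = (\<Sum>k<n. \<Sum>l<n. y$k * (cnj (U $$ (k,l)) * cnj (x $ l)))"
    by (simp add: cnj_sum sum_distrib_left)
  also have "\<dots> = (\<Sum>l<n. \<Sum>k<n. y$k * (cnj (U $$ (k,l)) * cnj (x $ l)))"
    by (rule sum.swap)
  also have "\<dots> = (\<Sum>l<n. (\<Sum>k<n. cnj (U $$ (k,l)) * y $ k) * cnj (x $ l))"
    unfolding sum_distrib_right by (intro sum.cong refl) (simp add: mult_ac)
  also have "\<dots> = braket x (mat_adjoint U *\<^sub>v y)"
    using U x y adj_carrier[OF U] by (simp add: braket_sum[where n=n] scalar_prod_def lessThan_atLeast0 adj_index)
  finally show ?thesis .
qed

lemma smult_mat_mv: "A \<in> carrier_mat n n \<Longrightarrow> x \<in> carrier_vec n \<Longrightarrow> (c \<cdot>\<^sub>m A) *\<^sub>v x = c \<cdot>\<^sub>v (A *\<^sub>v (x::complex vec))"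
  by (intro eq_vecI) (auto simp: scalar_prod_def sum_distrib_left mult.assoc)

lemma build:
  assumes A: "A \<subseteq> carrier_mat n n" and add: "\<forall>P\<in>A. \<forall>Q\<in>A. P + Q \<in> A"
    and sm: "\<forall>c::complex. \<forall>P\<in>A. c \<cdot>\<^sub>m P \<in> A" and one: "1\<^sub>m n \<in> A"
    and fin: "finite F" and Op: "\<forall>a\<in>F. Op a \<in> A" and x: "x \<in> carrier_vec n"
  shows "\<exists>S\<in>A. S *\<^sub>v x = vec n (\<lambda>k. \<Sum>a\<in>F. c a * (Op a *\<^sub>v x) $ k)"
  using fin Op
proof (induction F rule: finite_induct)
  case empty
  have "0 \<cdot>\<^sub>m 1\<^sub>m n \<in> A" using sm one by blast
  moreover have "(0 \<cdot>\<^sub>m 1\<^sub>m n) *\<^sub>v x = vec n (\<lambda>k. \<Sum>a\<in>{}. c a * (Op a *\<^sub>v x) $ k)"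
    using x by (intro eq_vecI) (auto simp: scalar_prod_def)
  ultimately show ?case by blast
next
  case (insert a F)
  then obtain S where S: "S \<in> A" "S *\<^sub>v x = vec n (\<lambda>k. \<Sum>a\<in>F. c a * (Op a *\<^sub>v x) $ k)" by auto
  have Oa: "Op a \<in> A" using insert by auto
  have SC: "S \<in> carrier_mat n n" "Op a \<in> carrier_mat n n" using S Oa A by auto
  have "S + c a \<cdot>\<^sub>m Op a \<in> A" using add sm S Oa by blast
  moreover have "(S + c a \<cdot>\<^sub>m Op a) *\<^sub>v x = S *\<^sub>v x + c a \<cdot>\<^sub>v (Op a *\<^sub>v x)"
    using SC x by (simp add: add_mult_distrib_mat_vec smult_mat_mv)
  moreover have "S *\<^sub>v x + c a \<cdot>\<^sub>v (Op a *\<^sub>v x) = vec n (\<lambda>k. \<Sum>a\<in>insert a F. c a * (Op a *\<^sub>v x) $ k)"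
    using S(2) SC x insert(1,2) by (intro eq_vecI) auto
  ultimately show ?case by metis
qed

theorem mainTheorem3:
  fixes n :: nat
    and I :: "'i set" and J :: "'j set"
    and ket :: "'i \<Rightarrow> 'j \<Rightarrow> complex vec"
    and eb :: "'i \<Rightarrow> real" and et :: "'j \<Rightarrow> real"
    and \<Omega>b :: 'i and \<Omega>t :: 'j
    and Ab At :: "complex mat set"
    and U :: "complex mat"
  assumes finI: "finite I" and finJ: "finite J"
    and ket_dim: "\<forall>i\<in>I. \<forall>j\<in>J. ket i j \<in> carrier_vec n"
    and ket_orthonormal: "\<forall>i\<in>I. \<forall>j\<in>J. \<forall>i'\<in>I. \<forall>j'\<in>J.
           braket (ket i j) (ket i' j') = (if i = i' \<and> j = j' then 1 else 0)"
    and \<Omega>b_in: "\<Omega>b \<in> I" and \<Omega>t_in: "\<Omega>t \<in> J"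
    and eb_\<Omega>: "eb \<Omega>b = 0" and et_\<Omega>: "et \<Omega>t = 0"
    and eb_nonneg: "\<forall>i\<in>I. 0 \<le> eb i" and et_nonneg: "\<forall>j\<in>J. 0 \<le> et j"
    and Ab_carrier: "Ab \<subseteq> carrier_mat n n"
    and Ab_add: "\<forall>A\<in>Ab. \<forall>B\<in>Ab. A + B \<in> Ab"
    and Ab_smult: "\<forall>c::complex. \<forall>A\<in>Ab. c \<cdot>\<^sub>m A \<in> Ab"
    and Ab_mult: "\<forall>A\<in>Ab. \<forall>B\<in>Ab. A * B \<in> Ab"
    and Ab_adj: "\<forall>A\<in>Ab. mat_adjoint A \<in> Ab"
    and Ab_one: "1\<^sub>m n \<in> Ab"
    and At_carrier: "At \<subseteq> carrier_mat n n"
    and At_add: "\<forall>A\<in>At. \<forall>B\<in>At. A + B \<in> At"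
    and At_smult: "\<forall>c::complex. \<forall>A\<in>At. c \<cdot>\<^sub>m A \<in> At"
    and At_mult: "\<forall>A\<in>At. \<forall>B\<in>At. A * B \<in> At"
    and At_adj: "\<forall>A\<in>At. mat_adjoint A \<in> At"
    and At_one: "1\<^sub>m n \<in> At"
    and Ab_At_commute: "\<forall>A\<in>Ab. \<forall>B\<in>At. A * B = B * A"
    and U_carrier: "U \<in> carrier_mat n n"
    and U_unitary: "U * mat_adjoint U = 1\<^sub>m n" "mat_adjoint U * U = 1\<^sub>m n"
    and U_Ab: "\<forall>A\<in>Ab. mat_adjoint U * A * U \<in> Ab \<and> U * A * mat_adjoint U \<in> Ab"
    and U_At: "\<forall>A\<in>At. mat_adjoint U * A * U \<in> At \<and> U * A * mat_adjoint U \<in> At"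
    and A1b: "\<forall>i\<in>I. \<forall>i'\<in>I. \<exists>Op\<in>Ab. \<forall>k\<in>I. \<forall>j\<in>J.
           Op *\<^sub>v ket k j = (if k = i then ket i' j else 0\<^sub>v n)"
    and A1t: "\<forall>j\<in>J. \<forall>j'\<in>J. \<exists>Op\<in>At. \<forall>i\<in>I. \<forall>l\<in>J.
           Op *\<^sub>v ket i l = (if l = j then ket i j' else 0\<^sub>v n)"
    and A2: "\<forall>i\<in>I. \<forall>j\<in>J. \<forall>Ob\<in>Ab. \<forall>Ot\<in>At.
           braket (ket i j) ((Ob * Ot) *\<^sub>v ket i j)
             = braket (ket i j) (Ob *\<^sub>v ket i j) * braket (ket i j) (Ot *\<^sub>v ket i j)"
    and A3: "\<exists>\<delta>>0. \<forall>v\<in>kspan n ket ({i\<in>I. eb i \<le> \<delta>} \<times> {j\<in>J. et j \<le> \<delta>}).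
           U *\<^sub>v v \<in> kspan n ket (I \<times> J)"
  shows "(\<exists>Sb\<in>Ab. \<exists>St\<in>At. U *\<^sub>v ket \<Omega>b \<Omega>t = Sb *\<^sub>v (St *\<^sub>v ket \<Omega>b \<Omega>t))
       \<and> (\<exists>X :: 'i \<times> 'j \<Rightarrow> complex. \<exists>\<alpha> :: 'i \<Rightarrow> complex. \<exists>\<beta> :: 'j \<Rightarrow> complex.
            U *\<^sub>v ket \<Omega>b \<Omega>t = kcomb n ket (I \<times> J) X
            \<and> (\<forall>i\<in>I. \<forall>j\<in>J. X (i, j) = \<alpha> i * \<beta> j))"
proof -
  define k0 where "k0 = ket \<Omega>b \<Omega>t"
  have k0C: "k0 \<in> carrier_vec n" using ket_dim \<Omega>b_in \<Omega>t_in k0_def by auto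
  have UA: "mat_adjoint U \<in> carrier_mat n n" using adj_carrier[OF U_carrier] .
  have kC: "\<And>i j. i \<in> I \<Longrightarrow> j \<in> J \<Longrightarrow> ket i j \<in> carrier_vec n" using ket_dim by auto
  have kcC: "\<forall>p\<in>I\<times>J. ket (fst p) (snd p) \<in> carrier_vec n" using ket_dim by auto
  obtain \<delta> where \<delta>: "\<delta> > 0" and h\<delta>: "\<forall>v\<in>kspan n ket ({i\<in>I. eb i \<le> \<delta>} \<times> {j\<in>J. et j \<le> \<delta>}).
           U *\<^sub>v v \<in> kspan n ket (I \<times> J)" using A3 by blast
  define S\<delta> where "S\<delta> = {i\<in>I. eb i \<le> \<delta>} \<times> {j\<in>J. et j \<le> \<delta>}"
  have \<Omega>S: "(\<Omega>b, \<Omega>t) \<in> S\<delta>" using \<Omega>b_in \<Omega>t_in eb_\<Omega> et_\<Omega> \<delta> S\<delta>_def by auto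
  have finS: "finite S\<delta>" using finI finJ S\<delta>_def by auto
  have "kcomb n ket S\<delta> (\<lambda>p. if p = (\<Omega>b, \<Omega>t) then 1 else 0) = k0"
  proof (rule eq_vecI)
    fix k assume "k < dim_vec k0"
    hence k: "k < n" using k0C by auto
    have "(\<Sum>p\<in>S\<delta>. (if p = (\<Omega>b, \<Omega>t) then 1 else 0) * ket (fst p) (snd p) $ k)
          = (\<Sum>p\<in>S\<delta>. if p = (\<Omega>b, \<Omega>t) then ket (fst p) (snd p) $ k else 0)"
      by (intro sum.cong refl) auto
    also have "\<dots> = k0 $ k" using \<Omega>S finS k0_def by (simp add: sum.delta')
    finally show "kcomb n ket S\<delta> (\<lambda>p. if p = (\<Omega>b, \<Omega>t) then 1 else 0) $ k = k0 $ k"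
      using k by (simp add: kcomb_def)
  qed (use k0C in \<open>simp add: kcomb_def\<close>)
  hence "k0 \<in> kspan n ket S\<delta>" unfolding kspan_def by blast
  hence "U *\<^sub>v k0 \<in> kspan n ket (I \<times> J)" using h\<delta> S\<delta>_def by blast
  then obtain X where X: "U *\<^sub>v k0 = kcomb n ket (I \<times> J) X" unfolding kspan_def by blast
  define \<psi> where "\<psi> = U *\<^sub>v k0"
  have \<psi>C: "\<psi> \<in> carrier_vec n" using \<psi>_def U_carrier k0C by auto
  have \<psi>X: "\<psi> = vec n (\<lambda>k. \<Sum>p\<in>I\<times>J. X p * ket (fst p) (snd p) $ k)"
    using X \<psi>_def by (simp add: kcomb_def)
  have fact: "\<exists>\<alpha> \<beta>. \<forall>i\<in>I. \<forall>j\<in>J. X (i, j) = \<alpha> i * \<beta> j"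
  proof (cases "\<forall>p\<in>I\<times>J. X p = 0")
    case True
    thus ?thesis by (intro exI[of _ "\<lambda>_. 0"]) auto
  next
    case False
    then obtain i0 j0 where i0: "i0 \<in> I" and j0: "j0 \<in> J" and X0: "X (i0, j0) \<noteq> 0" by auto
    have "\<forall>i\<in>I. \<exists>Op\<in>Ab. \<forall>k\<in>I. \<forall>j\<in>J. Op *\<^sub>v ket k j = (if k = i then ket i0 j else 0\<^sub>v n)"
      using A1b i0 by blast
    then obtain Ob where Ob: "\<forall>i\<in>I. Ob i \<in> Ab \<and> (\<forall>k\<in>I. \<forall>j\<in>J. Ob i *\<^sub>v ket k j = (if k = i then ket i0 j else 0\<^sub>v n))"
      by metis
    have "\<forall>j\<in>J. \<exists>Op\<in>At. \<forall>i\<in>I. \<forall>l\<in>J. Op *\<^sub>v ket i l = (if l = j then ket i j0 else 0\<^sub>v n)"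
      using A1t j0 by blast
    then obtain Ot where Ot: "\<forall>j\<in>J. Ot j \<in> At \<and> (\<forall>i\<in>I. \<forall>l\<in>J. Ot j *\<^sub>v ket i l = (if l = j then ket i j0 else 0\<^sub>v n))"
      by metis
    have key: "cnj (X (i0, j0)) * X (i, j) = braket k0 ((mat_adjoint U * Ob i * U) *\<^sub>v k0) * braket k0 ((mat_adjoint U * Ot j * U) *\<^sub>v k0)"
      if i: "i \<in> I" and j: "j \<in> J" for i j
    proof -
      have ObC: "Ob i \<in> carrier_mat n n" using Ob i Ab_carrier by auto
      have OtC: "Ot j \<in> carrier_mat n n" using Ot j At_carrier by auto
      have MC: "Ob i * Ot j \<in> carrier_mat n n" using ObC OtC by auto
      have act: "(Ob i * Ot j) *\<^sub>v ket (fst p) (snd p) = (if p = (i, j) then ket i0 j0 else 0\<^sub>v n)"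
        if p: "p \<in> I \<times> J" for p
      proof -
        have "(Ob i * Ot j) *\<^sub>v ket (fst p) (snd p) = Ob i *\<^sub>v (Ot j *\<^sub>v ket (fst p) (snd p))"
          using ObC OtC p kC by auto
        thus ?thesis using Ob Ot p i j i0 j0 ObC by (cases p) auto
      qed
      have "(Ob i * Ot j) *\<^sub>v \<psi> = vec n (\<lambda>k. \<Sum>p\<in>I\<times>J. X p * ((Ob i * Ot j) *\<^sub>v ket (fst p) (snd p)) $ k)"
        unfolding \<psi>X using mv_vecsum[OF MC kcC] .
      also have "\<dots> = X (i, j) \<cdot>\<^sub>v ket i0 j0"
      proof (rule eq_vecI)
        fix k assume "k < dim_vec (X (i, j) \<cdot>\<^sub>v ket i0 j0)"
        hence k: "k < n" using kC[OF i0 j0] by auto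
        have "(\<Sum>p\<in>I\<times>J. X p * ((Ob i * Ot j) *\<^sub>v ket (fst p) (snd p)) $ k)
            = (\<Sum>p\<in>I\<times>J. if p = (i, j) then X p * ket i0 j0 $ k else 0)"
          using act k by (intro sum.cong refl) auto
        also have "\<dots> = X (i, j) * ket i0 j0 $ k" using i j finI finJ by (simp add: sum.delta')
        finally show "vec n (\<lambda>k. \<Sum>p\<in>I\<times>J. X p * ((Ob i * Ot j) *\<^sub>v ket (fst p) (snd p)) $ k) $ k
              = (X (i, j) \<cdot>\<^sub>v ket i0 j0) $ k" using k kC[OF i0 j0] by simp
      qed (use kC[OF i0 j0] in simp)
      finally have M\<psi>: "(Ob i * Ot j) *\<^sub>v \<psi> = X (i, j) \<cdot>\<^sub>v ket i0 j0" .
      have wC: "X (i, j) \<cdot>\<^sub>v ket i0 j0 \<in> carrier_vec n" using kC[OF i0 j0] by auto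
      have "braket \<psi> ((Ob i * Ot j) *\<^sub>v \<psi>) = (\<Sum>p\<in>I\<times>J. cnj (X p) * braket (ket (fst p) (snd p)) (X (i, j) \<cdot>\<^sub>v ket i0 j0))"
        unfolding M\<psi> unfolding \<psi>X using braket_vecsum_left[OF wC kcC] .
      also have "\<dots> = (\<Sum>p\<in>I\<times>J. if p = (i0, j0) then cnj (X p) * X (i, j) else 0)"
      proof (intro sum.cong refl)
        fix p assume p: "p \<in> I \<times> J"
        have "braket (ket (fst p) (snd p)) (X (i, j) \<cdot>\<^sub>v ket i0 j0) = X (i, j) * braket (ket (fst p) (snd p)) (ket i0 j0)"
        proof -
          have pC: "ket (fst p) (snd p) \<in> carrier_vec n" using p kC by auto
          show ?thesis using kC[OF i0 j0]
            by (simp add: braket_sum[OF pC wC] braket_sum[OF pC kC[OF i0 j0]] sum_distrib_left mult.assoc)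
        qed
        also have "\<dots> = X (i, j) * (if p = (i0, j0) then 1 else 0)"
          using ket_orthonormal p i0 j0 by (cases p) auto
        finally show "cnj (X p) * braket (ket (fst p) (snd p)) (X (i, j) \<cdot>\<^sub>v ket i0 j0) = (if p = (i0, j0) then cnj (X p) * X (i, j) else 0)"
          by simp
      qed
      also have "\<dots> = cnj (X (i0, j0)) * X (i, j)" using i0 j0 finI finJ by (simp add: sum.delta')
      finally have L: "braket \<psi> ((Ob i * Ot j) *\<^sub>v \<psi>) = cnj (X (i0, j0)) * X (i, j)" .
      have "braket \<psi> ((Ob i * Ot j) *\<^sub>v \<psi>) = braket k0 (mat_adjoint U *\<^sub>v ((Ob i * Ot j) *\<^sub>v (U *\<^sub>v k0)))"
        unfolding \<psi>_def using braket_adj[OF U_carrier k0C] MC U_carrier k0C by auto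
      also have "\<dots> = braket k0 (((mat_adjoint U * Ob i * U) * (mat_adjoint U * Ot j * U)) *\<^sub>v k0)"
      proof -
        have "U *\<^sub>v (mat_adjoint U *\<^sub>v (Ot j *\<^sub>v (U *\<^sub>v k0))) = (U * mat_adjoint U) *\<^sub>v (Ot j *\<^sub>v (U *\<^sub>v k0))"
          using U_carrier UA OtC k0C by auto
        also have "\<dots> = Ot j *\<^sub>v (U *\<^sub>v k0)" using U_unitary(1) U_carrier OtC k0C by auto
        finally have e: "U *\<^sub>v (mat_adjoint U *\<^sub>v (Ot j *\<^sub>v (U *\<^sub>v k0))) = Ot j *\<^sub>v (U *\<^sub>v k0)" .
        have "((mat_adjoint U * Ob i * U) * (mat_adjoint U * Ot j * U)) *\<^sub>v k0
            = mat_adjoint U *\<^sub>v (Ob i *\<^sub>v (U *\<^sub>v (mat_adjoint U *\<^sub>v (Ot j *\<^sub>v (U *\<^sub>v k0)))))"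
        proof -
          have c1: "mat_adjoint U * Ob i \<in> carrier_mat n n" "mat_adjoint U * Ot j \<in> carrier_mat n n"
            using UA ObC OtC by auto
          have c2: "mat_adjoint U * Ob i * U \<in> carrier_mat n n" "mat_adjoint U * Ot j * U \<in> carrier_mat n n"
            using c1 U_carrier by auto
          have z: "U *\<^sub>v k0 \<in> carrier_vec n" "Ot j *\<^sub>v (U *\<^sub>v k0) \<in> carrier_vec n" "mat_adjoint U *\<^sub>v (Ot j *\<^sub>v (U *\<^sub>v k0)) \<in> carrier_vec n"
            using U_carrier OtC UA k0C by auto
          have "((mat_adjoint U * Ob i * U) * (mat_adjoint U * Ot j * U)) *\<^sub>v k0
              = (mat_adjoint U * Ob i * U) *\<^sub>v ((mat_adjoint U * Ot j * U) *\<^sub>v k0)"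
            using c2 k0C by (rule assoc_mult_mat_vec)
          also have "(mat_adjoint U * Ot j * U) *\<^sub>v k0 = mat_adjoint U *\<^sub>v (Ot j *\<^sub>v (U *\<^sub>v k0))"
            by (simp only: assoc_mult_mat_vec[OF c1(2) U_carrier k0C] assoc_mult_mat_vec[OF UA OtC z(1)])
          also have "(mat_adjoint U * Ob i * U) *\<^sub>v (mat_adjoint U *\<^sub>v (Ot j *\<^sub>v (U *\<^sub>v k0)))
              = mat_adjoint U *\<^sub>v (Ob i *\<^sub>v (U *\<^sub>v (mat_adjoint U *\<^sub>v (Ot j *\<^sub>v (U *\<^sub>v k0)))))"
            using U_carrier z(3) by (simp only: assoc_mult_mat_vec[OF c1(1) U_carrier z(3)] assoc_mult_mat_vec[OF UA ObC mult_mat_vec_carrier])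
          finally show ?thesis .
        qed
        also have "\<dots> = mat_adjoint U *\<^sub>v ((Ob i * Ot j) *\<^sub>v (U *\<^sub>v k0))"
          unfolding e using U_carrier UA OtC ObC k0C by auto
        finally show ?thesis by simp
      qed
      also have "\<dots> = braket k0 ((mat_adjoint U * Ob i * U) *\<^sub>v k0) * braket k0 ((mat_adjoint U * Ot j * U) *\<^sub>v k0)"
        using A2 \<Omega>b_in \<Omega>t_in U_Ab U_At Ob Ot i j unfolding k0_def by blast
      finally show ?thesis using L by simp
    qed
    show ?thesis
    proof (intro exI ballI)
      fix i j assume i: "i \<in> I" and j: "j \<in> J"
      have "cnj (X (i0, j0)) \<noteq> 0" using X0 by simp
      thus "X (i, j) = braket k0 ((mat_adjoint U * Ob i * U) *\<^sub>v k0) / cnj (X (i0, j0)) * braket k0 ((mat_adjoint U * Ot j * U) *\<^sub>v k0)"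
        using key[OF i j] by (simp add: field_simps)
    qed
  qed
  then obtain \<alpha> \<beta> where \<alpha>\<beta>: "\<forall>i\<in>I. \<forall>j\<in>J. X (i, j) = \<alpha> i * \<beta> j" by blast
  have "\<forall>i\<in>I. \<exists>Op\<in>Ab. \<forall>k\<in>I. \<forall>j\<in>J. Op *\<^sub>v ket k j = (if k = \<Omega>b then ket i j else 0\<^sub>v n)"
    using A1b \<Omega>b_in by blast
  then obtain Pb where Pb: "\<forall>i\<in>I. Pb i \<in> Ab \<and> (\<forall>k\<in>I. \<forall>j\<in>J. Pb i *\<^sub>v ket k j = (if k = \<Omega>b then ket i j else 0\<^sub>v n))"
    by metis
  have "\<forall>j\<in>J. \<exists>Op\<in>At. \<forall>i\<in>I. \<forall>l\<in>J. Op *\<^sub>v ket i l = (if l = \<Omega>t then ket i j else 0\<^sub>v n)"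
    using A1t \<Omega>t_in by blast
  then obtain Pt where Pt: "\<forall>j\<in>J. Pt j \<in> At \<and> (\<forall>i\<in>I. \<forall>l\<in>J. Pt j *\<^sub>v ket i l = (if l = \<Omega>t then ket i j else 0\<^sub>v n))"
    by metis
  obtain St where St: "St \<in> At" "St *\<^sub>v k0 = vec n (\<lambda>k. \<Sum>j\<in>J. \<beta> j * (Pt j *\<^sub>v k0) $ k)"
    using build[OF At_carrier At_add At_smult At_one finJ, of Pt k0 \<beta>] Pt k0C by blast
  define y where "y = vec n (\<lambda>k. \<Sum>j\<in>J. \<beta> j * ket \<Omega>b j $ k)"
  have Sty: "St *\<^sub>v k0 = y" unfolding St(2) y_def
    by (intro eq_vecI) (auto intro!: sum.cong simp: Pt \<Omega>b_in \<Omega>t_in k0_def)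
  have yC: "y \<in> carrier_vec n" unfolding y_def by simp
  obtain Sb where Sb: "Sb \<in> Ab" "Sb *\<^sub>v y = vec n (\<lambda>k. \<Sum>i\<in>I. \<alpha> i * (Pb i *\<^sub>v y) $ k)"
    using build[OF Ab_carrier Ab_add Ab_smult Ab_one finI, of Pb y \<alpha>] Pb yC by blast
  have Pby: "Pb i *\<^sub>v y = vec n (\<lambda>k. \<Sum>j\<in>J. \<beta> j * ket i j $ k)" if i: "i \<in> I" for i
  proof -
    have PC: "Pb i \<in> carrier_mat n n" using Pb i Ab_carrier by auto
    have "Pb i *\<^sub>v y = vec n (\<lambda>k. \<Sum>j\<in>J. \<beta> j * (Pb i *\<^sub>v ket \<Omega>b j) $ k)"
      unfolding y_def by (rule mv_vecsum[OF PC]) (use kC \<Omega>b_in in auto)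
    also have "\<dots> = vec n (\<lambda>k. \<Sum>j\<in>J. \<beta> j * ket i j $ k)"
      by (intro eq_vecI) (auto intro!: sum.cong simp: Pb i \<Omega>b_in)
    finally show ?thesis .
  qed
  have "Sb *\<^sub>v y = \<psi>"
  proof (rule eq_vecI)
    fix k assume "k < dim_vec \<psi>"
    hence k: "k < n" using \<psi>C by auto
    have "(Sb *\<^sub>v y) $ k = (\<Sum>i\<in>I. \<alpha> i * (\<Sum>j\<in>J. \<beta> j * ket i j $ k))"
      using k Sb(2) Pby by simp
    also have "\<dots> = (\<Sum>i\<in>I. \<Sum>j\<in>J. X (i, j) * ket i j $ k)"
      using \<alpha>\<beta> by (simp add: sum_distrib_left mult.assoc)
    also have "\<dots> = (\<Sum>p\<in>I\<times>J. X p * ket (fst p) (snd p) $ k)"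
      by (simp add: sum.cartesian_product split_beta)
    also have "\<dots> = \<psi> $ k" using k \<psi>X by simp
    finally show "(Sb *\<^sub>v y) $ k = \<psi> $ k" .
  qed (use \<psi>C Sb yC Ab_carrier in auto)
  hence "U *\<^sub>v ket \<Omega>b \<Omega>t = Sb *\<^sub>v (St *\<^sub>v ket \<Omega>b \<Omega>t)" using Sty \<psi>_def k0_def by simp
  thus ?thesis using Sb(1) St(1) X \<alpha>\<beta> k0_def by blast
qed

end
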